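(* Let $F(X)\in\mathbb{Z}[X]$ be monic irreducible of degree $d$ with fixed root $\xi$, $L=\mathbb{Q}(\xi)$ Galois over $\mathbb{Q}$ with group $G$, and $\{\sigma\xi\}_{\sigma\in G}$ a normal basis of $L$. Let $K_1,\dots,K_r$ be the conjugacy classes of $G$, $\Gamma=[X_{\sigma\tau^{-1}}]_{\sigma,\tau\in G}$, $\partial_\tau=\frac{1}{|G|}\frac{\partial\det\Gamma}{\partial X_\tau}$, and let $\partial_\tau(\xi)$, $\det\Gamma_\xi$ be the values under $X_\sigma\mapsto\sigma\xi$. For $i\ge0$ and $1\le j\le r$ set $$a_{K_j,i}=\frac{1}{\det\Gamma_\xi}\sum_{\sigma\in G}\sum_{\tau\in K_j}\sigma(\xi^i)\,\partial_{\sigma\tau}(\xi).$$ Then $a_{K_j,i}\in\mathbb{Q}$ for all $i\ge0$ and all $j$. *)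

theory Defs
  imports "HOL-Analysis.Analysis" "HOL-Computational_Algebra.Polynomial_Factorial" "HOL-Combinatorics.Permutations"
begin

definition is_subfield :: "complex set \<Rightarrow> bool" where
  "is_subfield S \<longleftrightarrow> 0 \<in> S \<and> 1 \<in> S \<and>
     (\<forall>x\<in>S. \<forall>y\<in>S. x + y \<in> S \<and> x - y \<in> S \<and> x * y \<in> S) \<and>
     (\<forall>x\<in>S. x \<noteq> 0 \<longrightarrow> inverse x \<in> S)"

definition gen_field :: "complex \<Rightarrow> complex set" where
  "gen_field \<xi> = \<Inter>{S. is_subfield S \<and> \<xi> \<in> S}"

text \<open>Normality over Q (separability is automatic in characteristic 0): every irreducible
  rational polynomial with a root in L has all its (complex) roots in L.\<close>
definition galois_over_Q :: "complex set \<Rightarrow> bool" where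
  "galois_over_Q L \<longleftrightarrow> (\<forall>p :: rat poly. irreducible p \<longrightarrow>
      (\<exists>x\<in>L. poly (map_poly of_rat p) x = 0) \<longrightarrow>
      (\<forall>z. poly (map_poly of_rat p) z = 0 \<longrightarrow> z \<in> L))"

text \<open>Field automorphisms of L (they automatically fix Q, so this is Gal(L/Q));
  normalised to be the identity outside L.\<close>
definition Aut :: "complex set \<Rightarrow> (complex \<Rightarrow> complex) set" where
  "Aut L = {\<sigma>. bij_betw \<sigma> L L \<and>
     (\<forall>x\<in>L. \<forall>y\<in>L. \<sigma> (x + y) = \<sigma> x + \<sigma> y \<and> \<sigma> (x * y) = \<sigma> x * \<sigma> y) \<and>
     \<sigma> 1 = 1 \<and> (\<forall>x. x \<notin> L \<longrightarrow> \<sigma> x = x)}"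

definition normal_basis :: "complex set \<Rightarrow> (complex \<Rightarrow> complex) set \<Rightarrow> complex \<Rightarrow> bool" where
  "normal_basis L G \<xi> \<longleftrightarrow> inj_on (\<lambda>\<sigma>. \<sigma> \<xi>) G \<and>
     (\<forall>c :: (complex \<Rightarrow> complex) \<Rightarrow> rat. (\<Sum>\<sigma>\<in>G. of_rat (c \<sigma>) * \<sigma> \<xi>) = 0 \<longrightarrow> (\<forall>\<sigma>\<in>G. c \<sigma> = 0)) \<and>
     (\<forall>x\<in>L. \<exists>c :: (complex \<Rightarrow> complex) \<Rightarrow> rat. x = (\<Sum>\<sigma>\<in>G. of_rat (c \<sigma>) * \<sigma> \<xi>))"

text \<open>det of the group matrix [X_{sigma tau^{-1}}] (Leibniz formula), at the point X = x.\<close>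
definition gdet :: "(complex \<Rightarrow> complex) set \<Rightarrow> ((complex \<Rightarrow> complex) \<Rightarrow> complex) \<Rightarrow> complex" where
  "gdet G x = (\<Sum>\<pi> | \<pi> permutes G. of_int (sign \<pi>) * (\<Prod>\<sigma>\<in>G. x (\<sigma> \<circ> inv (\<pi> \<sigma>))))"

definition gpartial :: "(complex \<Rightarrow> complex) set \<Rightarrow> ((complex \<Rightarrow> complex) \<Rightarrow> complex) \<Rightarrow> (complex \<Rightarrow> complex) \<Rightarrow> complex" where
  "gpartial G x \<tau> = (1 / of_nat (card G)) * deriv (\<lambda>t. gdet G (x(\<tau> := x \<tau> + t))) 0"

definition conj_class :: "(complex \<Rightarrow> complex) set \<Rightarrow> (complex \<Rightarrow> complex) \<Rightarrow> (complex \<Rightarrow> complex) set" where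
  "conj_class G \<tau> = {\<rho> \<circ> \<tau> \<circ> inv \<rho> | \<rho>. \<rho> \<in> G}"

definition a_coeff :: "(complex \<Rightarrow> complex) set \<Rightarrow> complex \<Rightarrow> (complex \<Rightarrow> complex) set \<Rightarrow> nat \<Rightarrow> complex" where
  "a_coeff G \<xi> K i = (1 / gdet G (\<lambda>\<sigma>. \<sigma> \<xi>)) *
     (\<Sum>\<sigma>\<in>G. \<Sum>\<tau>\<in>K. \<sigma> (\<xi> ^ i) * gpartial G (\<lambda>\<sigma>. \<sigma> \<xi>) (\<sigma> \<circ> \<tau>))"

end

theory Submission imports Defs begin

definition gpd :: "(complex \<Rightarrow> complex) set \<Rightarrow> ((complex \<Rightarrow> complex) \<Rightarrow> complex) \<Rightarrow> (complex \<Rightarrow> complex) \<Rightarrow> complex" where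
  "gpd G y \<tau> = (\<Sum>\<pi> | \<pi> permutes G. of_int (sign \<pi>) *
      (\<Sum>s\<in>G. (if s \<circ> inv (\<pi> s) = \<tau> then 1 else 0) * (\<Prod>\<sigma>\<in>G-{s}. y (\<sigma> \<circ> inv (\<pi> \<sigma>)))))"

lemma gdet_deriv:
  assumes "finite G"
  shows "((\<lambda>t. gdet G (y(\<tau> := y \<tau> + t))) has_field_derivative gpd G y \<tau>) (at 0)"
proof -
  have fd: "((\<lambda>t. (y(\<tau> := y \<tau> + t)) (\<sigma> \<circ> inv (\<pi> \<sigma>))) has_field_derivative
      (if \<sigma> \<circ> inv (\<pi> \<sigma>) = \<tau> then 1 else 0)) (at 0)" for \<sigma> \<pi>
  proof (cases "\<sigma> \<circ> inv (\<pi> \<sigma>) = \<tau>")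
    case True
    then show ?thesis by (auto intro!: derivative_eq_intros)
  next
    case False
    then show ?thesis by (auto intro!: derivative_eq_intros)
  qed
  have "((\<lambda>t. \<Sum>\<pi> | \<pi> permutes G. of_int (sign \<pi>) * (\<Prod>\<sigma>\<in>G. (y(\<tau> := y \<tau> + t)) (\<sigma> \<circ> inv (\<pi> \<sigma>))))
     has_field_derivative (\<Sum>\<pi> | \<pi> permutes G. of_int (sign \<pi>) *
      (\<Sum>s\<in>G. (if s \<circ> inv (\<pi> s) = \<tau> then 1 else 0) * (\<Prod>\<sigma>\<in>G-{s}. (y(\<tau> := y \<tau> + 0)) (\<sigma> \<circ> inv (\<pi> \<sigma>)))))) (at 0)"
    by (intro DERIV_sum DERIV_cmult has_field_derivative_prod fd)
  then show ?thesis unfolding gdet_def gpd_def by simp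
qed

lemma gdet_shift:
  assumes fin: "finite G" and b: "bij \<rho>" and c1: "\<forall>\<sigma>\<in>G. \<rho> \<circ> \<sigma> \<in> G" and c2: "\<forall>\<sigma>\<in>G. inv \<rho> \<circ> \<sigma> \<in> G"
  shows "gdet G (\<lambda>\<sigma>. y (\<rho> \<circ> \<sigma>)) = of_int (sign (\<lambda>\<sigma>. if \<sigma>\<in>G then inv \<rho> \<circ> \<sigma> else \<sigma>)) * gdet G y"
proof -
  define M where "M = (\<lambda>\<sigma>. if \<sigma>\<in>G then inv \<rho> \<circ> \<sigma> else \<sigma>)"
  have ri: "\<rho> \<circ> inv \<rho> = id" using b by (meson bij_is_surj surj_iff)
  have ir: "inv \<rho> \<circ> \<rho> = id" using b by (meson bij_is_inj inj_iff)
  have bL: "bij_betw (\<lambda>\<sigma>. inv \<rho> \<circ> \<sigma>) G G"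
    by (rule bij_betwI[where g="\<lambda>\<sigma>. \<rho> \<circ> \<sigma>"]) (auto simp: c1 c2 comp_assoc[symmetric] ri ir)
  have bM: "bij_betw M G G"
    using bL by (rule bij_betw_cong[THEN iffD1, rotated]) (simp add: M_def)
  have Mp: "M permutes G" by (rule bij_imp_permutes[OF bM]) (simp add: M_def)
  have step1: "(\<Prod>\<sigma>\<in>G. y (\<rho> \<circ> (\<sigma> \<circ> inv (\<pi> \<sigma>)))) = (\<Prod>\<sigma>\<in>G. y (\<sigma> \<circ> inv ((\<pi> \<circ> M) \<sigma>)))" for \<pi>
  proof -
    have "(\<Prod>\<sigma>\<in>G. y (\<rho> \<circ> (\<sigma> \<circ> inv (\<pi> \<sigma>)))) = (\<Prod>\<sigma>\<in>G. y (\<rho> \<circ> ((inv \<rho> \<circ> \<sigma>) \<circ> inv (\<pi> (inv \<rho> \<circ> \<sigma>)))))"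
      using prod.reindex_bij_betw[OF bL, of "\<lambda>\<sigma>. y (\<rho> \<circ> (\<sigma> \<circ> inv (\<pi> \<sigma>)))"] by simp
    also have "\<dots> = (\<Prod>\<sigma>\<in>G. y (\<sigma> \<circ> inv ((\<pi> \<circ> M) \<sigma>)))"
      by (rule prod.cong) (auto simp: M_def comp_assoc[symmetric] ri)
    finally show ?thesis .
  qed
  have "gdet G y = (\<Sum>\<pi> | \<pi> permutes G. of_int (sign (\<pi> \<circ> M)) * (\<Prod>\<sigma>\<in>G. y (\<sigma> \<circ> inv ((\<pi> \<circ> M) \<sigma>))))"
    unfolding gdet_def by (rule sum_permutations_compose_right[OF Mp])
  also have "\<dots> = (\<Sum>\<pi> | \<pi> permutes G. of_int (sign M) * (of_int (sign \<pi>) * (\<Prod>\<sigma>\<in>G. y (\<rho> \<circ> (\<sigma> \<circ> inv (\<pi> \<sigma>))))))"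
  proof (rule sum.cong[OF refl])
    fix \<pi> assume "\<pi> \<in> {\<pi>. \<pi> permutes G}"
    then have "permutation \<pi>" "permutation M" using fin Mp by (auto simp: permutation_permutes)
    then show "of_int (sign (\<pi> \<circ> M)) * (\<Prod>\<sigma>\<in>G. y (\<sigma> \<circ> inv ((\<pi> \<circ> M) \<sigma>))) =
      of_int (sign M) * (of_int (sign \<pi>) * (\<Prod>\<sigma>\<in>G. y (\<rho> \<circ> (\<sigma> \<circ> inv (\<pi> \<sigma>)))))"
      by (simp add: sign_compose step1)
  qed
  also have "\<dots> = of_int (sign M) * gdet G (\<lambda>\<sigma>. y (\<rho> \<circ> \<sigma>))"
    unfolding gdet_def by (simp add: sum_distrib_left)
  finally have "of_int (sign M) * gdet G y = of_int (sign M) * of_int (sign M) * gdet G (\<lambda>\<sigma>. y (\<rho> \<circ> \<sigma>))"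
    by simp
  also have "of_int (sign M) * of_int (sign M) = (1::complex)"
    by (metis of_int_1 of_int_mult sign_idempotent)
  finally show ?thesis by (simp add: M_def comp_def)
qed

lemma gpd_shift:
  assumes fin: "finite G" and b: "bij \<rho>" and c1: "\<forall>\<sigma>\<in>G. \<rho> \<circ> \<sigma> \<in> G" and c2: "\<forall>\<sigma>\<in>G. inv \<rho> \<circ> \<sigma> \<in> G"
  shows "gpd G (\<lambda>\<sigma>. y (\<rho> \<circ> \<sigma>)) \<tau> = of_int (sign (\<lambda>\<sigma>. if \<sigma>\<in>G then inv \<rho> \<circ> \<sigma> else \<sigma>)) * gpd G y (\<rho> \<circ> \<tau>)"
proof -
  define s where "s = (of_int (sign (\<lambda>\<sigma>. if \<sigma>\<in>G then inv \<rho> \<circ> \<sigma> else \<sigma>)) :: complex)"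
  have ir: "inv \<rho> \<circ> \<rho> = id" using b by (meson bij_is_inj inj_iff)
  have inj: "\<rho> \<circ> \<sigma> = \<rho> \<circ> \<tau> \<longleftrightarrow> \<sigma> = \<tau>" for \<sigma>
    by (metis comp_assoc id_comp ir)
  have eq: "(\<lambda>\<sigma>. y (\<rho> \<circ> \<sigma>))(\<tau> := y (\<rho> \<circ> \<tau>) + t) = (\<lambda>\<sigma>. (y(\<rho> \<circ> \<tau> := y (\<rho> \<circ> \<tau>) + t)) (\<rho> \<circ> \<sigma>))" for t
    unfolding fun_upd_def inj by (rule refl)
  have "((\<lambda>t. gdet G ((\<lambda>\<sigma>. y (\<rho> \<circ> \<sigma>))(\<tau> := y (\<rho> \<circ> \<tau>) + t))) has_field_derivative gpd G (\<lambda>\<sigma>. y (\<rho> \<circ> \<sigma>)) \<tau>) (at 0)"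
    using gdet_deriv[OF fin, of "\<lambda>\<sigma>. y (\<rho> \<circ> \<sigma>)" \<tau>] by simp
  moreover have "((\<lambda>t. gdet G ((\<lambda>\<sigma>. y (\<rho> \<circ> \<sigma>))(\<tau> := y (\<rho> \<circ> \<tau>) + t))) has_field_derivative s * gpd G y (\<rho> \<circ> \<tau>)) (at 0)"
    unfolding eq gdet_shift[OF assms] s_def[symmetric]
    by (intro DERIV_cmult gdet_deriv fin)
  ultimately show ?thesis using DERIV_unique s_def by blast
qed

section \<open>Subfields\<close>

lemma sf_0: "is_subfield L \<Longrightarrow> 0 \<in> L" and sf_1: "is_subfield L \<Longrightarrow> 1 \<in> L"
  by (auto simp: is_subfield_def)
lemma sf_add: "is_subfield L \<Longrightarrow> x \<in> L \<Longrightarrow> y \<in> L \<Longrightarrow> x + y \<in> L"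
  and sf_diff: "is_subfield L \<Longrightarrow> x \<in> L \<Longrightarrow> y \<in> L \<Longrightarrow> x - y \<in> L"
  and sf_mult: "is_subfield L \<Longrightarrow> x \<in> L \<Longrightarrow> y \<in> L \<Longrightarrow> x * y \<in> L"
  by (auto simp: is_subfield_def)
lemma sf_inverse: "is_subfield L \<Longrightarrow> x \<in> L \<Longrightarrow> inverse x \<in> L"
  by (cases "x = 0") (auto simp: is_subfield_def)
lemma sf_uminus: "is_subfield L \<Longrightarrow> x \<in> L \<Longrightarrow> - x \<in> L"
  using sf_diff[of L 0 x] sf_0 by simp
lemma sf_divide: "is_subfield L \<Longrightarrow> x \<in> L \<Longrightarrow> y \<in> L \<Longrightarrow> x / y \<in> L"
  by (simp add: divide_inverse sf_mult sf_inverse)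
lemma sf_of_nat: "is_subfield L \<Longrightarrow> of_nat n \<in> L"
  by (induction n) (auto intro: sf_add sf_0 sf_1)
lemma sf_of_int: "is_subfield L \<Longrightarrow> of_int k \<in> L"
proof (cases "k \<ge> 0")
  case True
  then have "(of_int k::complex) = of_nat (nat k)" by simp
  then show "is_subfield L \<Longrightarrow> of_int k \<in> L" using sf_of_nat by metis
next
  case False
  then have "(of_int k::complex) = - of_nat (nat (-k))" by simp
  then show "is_subfield L \<Longrightarrow> of_int k \<in> L" using sf_of_nat sf_uminus by metis
qed
lemma sf_rat: "is_subfield L \<Longrightarrow> x \<in> \<rat> \<Longrightarrow> x \<in> L"
  by (auto elim!: Rats_cases' intro!: sf_divide sf_of_int)
lemma sf_sum: "is_subfield L \<Longrightarrow> (\<And>i. i \<in> A \<Longrightarrow> f i \<in> L) \<Longrightarrow> sum f A \<in> L"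
  by (induction A rule: infinite_finite_induct) (auto intro: sf_add sf_0)
lemma sf_prod: "is_subfield L \<Longrightarrow> (\<And>i. i \<in> A \<Longrightarrow> f i \<in> L) \<Longrightarrow> prod f A \<in> L"
  by (induction A rule: infinite_finite_induct) (auto intro: sf_mult sf_1)
lemma sf_power: "is_subfield L \<Longrightarrow> x \<in> L \<Longrightarrow> x ^ n \<in> L"
  by (induction n) (auto intro: sf_mult sf_1)

lemma gen_field_subfield: "is_subfield (gen_field \<xi>)"
  unfolding gen_field_def is_subfield_def by auto
lemma gen_field_xi: "\<xi> \<in> gen_field \<xi>"
  unfolding gen_field_def by auto

section \<open>Field homomorphisms\<close>

definition fh :: "complex set \<Rightarrow> (complex \<Rightarrow> complex) \<Rightarrow> bool" where
  "fh L \<rho> \<longleftrightarrow> (\<forall>x\<in>L. \<rho> x \<in> L) \<and> (\<forall>x\<in>L. \<forall>y\<in>L. \<rho> (x + y) = \<rho> x + \<rho> y \<and> \<rho> (x * y) = \<rho> x * \<rho> y) \<and> \<rho> 1 = 1"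

context
  fixes L \<rho> assumes S: "is_subfield L" and H: "fh L \<rho>"
begin

lemma fh_in: "x \<in> L \<Longrightarrow> \<rho> x \<in> L" using H by (auto simp: fh_def)
lemma fh_add: "x \<in> L \<Longrightarrow> y \<in> L \<Longrightarrow> \<rho> (x + y) = \<rho> x + \<rho> y" using H by (auto simp: fh_def)
lemma fh_mult: "x \<in> L \<Longrightarrow> y \<in> L \<Longrightarrow> \<rho> (x * y) = \<rho> x * \<rho> y" using H by (auto simp: fh_def)
lemma fh_1: "\<rho> 1 = 1" using H by (auto simp: fh_def)
lemma fh_0: "\<rho> 0 = 0"
  using fh_add[of 0 0] sf_0[OF S] by simp
lemma fh_uminus: "x \<in> L \<Longrightarrow> \<rho> (- x) = - \<rho> x"
proof -
  assume x: "x \<in> L"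
  have "\<rho> x + \<rho> (-x) = 0"
    using fh_add[OF x sf_uminus[OF S x]] fh_0 by simp
  then show ?thesis by (metis minus_unique)
qed
lemma fh_diff: "x \<in> L \<Longrightarrow> y \<in> L \<Longrightarrow> \<rho> (x - y) = \<rho> x - \<rho> y"
  using fh_add[of x "-y"] fh_uminus[of y] sf_uminus[OF S, of y] by simp
lemma fh_of_nat: "\<rho> (of_nat n) = of_nat n"
  by (induction n) (auto simp: fh_0 fh_1 fh_add sf_of_nat[OF S] sf_1[OF S])
lemma fh_of_int: "\<rho> (of_int k) = of_int k"
proof (cases "k \<ge> 0")
  case True
  then have "(of_int k::complex) = of_nat (nat k)" by simp
  then show ?thesis using fh_of_nat by metis
next
  case False
  then have "(of_int k::complex) = - of_nat (nat (-k))" by simp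
  then show ?thesis using fh_of_nat fh_uminus sf_of_nat[OF S] by metis
qed
lemma fh_inverse: "x \<in> L \<Longrightarrow> \<rho> (inverse x) = inverse (\<rho> x)"
proof (cases "x = 0")
  case True then show ?thesis by (simp add: fh_0)
next
  case False
  assume x: "x \<in> L"
  have "\<rho> x * \<rho> (inverse x) = 1"
    using fh_mult[OF x sf_inverse[OF S x]] False fh_1 by simp
  then show ?thesis by (metis inverse_unique)
qed
lemma fh_divide: "x \<in> L \<Longrightarrow> y \<in> L \<Longrightarrow> \<rho> (x / y) = \<rho> x / \<rho> y"
  by (simp add: divide_inverse fh_mult fh_inverse sf_inverse[OF S])
lemma fh_rat: "x \<in> \<rat> \<Longrightarrow> \<rho> x = x"
  by (auto elim!: Rats_cases' simp: fh_divide fh_of_int sf_of_int[OF S])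
lemma fh_sum: "(\<And>i. i \<in> A \<Longrightarrow> f i \<in> L) \<Longrightarrow> \<rho> (sum f A) = (\<Sum>i\<in>A. \<rho> (f i))"
  by (induction A rule: infinite_finite_induct) (auto simp: fh_0 fh_add sf_sum[OF S])
lemma fh_prod: "(\<And>i. i \<in> A \<Longrightarrow> f i \<in> L) \<Longrightarrow> \<rho> (prod f A) = (\<Prod>i\<in>A. \<rho> (f i))"
  by (induction A rule: infinite_finite_induct) (auto simp: fh_1 fh_mult sf_prod[OF S])

lemma fh_gdet:
  assumes "\<And>\<pi> \<sigma>. \<pi> permutes G \<Longrightarrow> \<sigma> \<in> G \<Longrightarrow> y (\<sigma> \<circ> inv (\<pi> \<sigma>)) \<in> L"
  shows "gdet G y \<in> L \<and> \<rho> (gdet G y) = gdet G (\<lambda>\<sigma>. \<rho> (y \<sigma>))"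
proof -
  have P: "(\<Prod>\<sigma>\<in>G. y (\<sigma> \<circ> inv (\<pi> \<sigma>))) \<in> L" if "\<pi> permutes G" for \<pi>
    using that assms by (auto intro!: sf_prod[OF S])
  have T: "of_int (sign \<pi>) * (\<Prod>\<sigma>\<in>G. y (\<sigma> \<circ> inv (\<pi> \<sigma>))) \<in> L" if "\<pi> permutes G" for \<pi>
    using P[OF that] by (intro sf_mult[OF S] sf_of_int[OF S])
  have "\<rho> (gdet G y) = (\<Sum>\<pi> | \<pi> permutes G. \<rho> (of_int (sign \<pi>) * (\<Prod>\<sigma>\<in>G. y (\<sigma> \<circ> inv (\<pi> \<sigma>)))))"
    unfolding gdet_def using T by (intro fh_sum) auto
  also have "\<dots> = gdet G (\<lambda>\<sigma>. \<rho> (y \<sigma>))" unfolding gdet_def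
  proof (rule sum.cong[OF refl])
    fix \<pi> assume "\<pi> \<in> {\<pi>. \<pi> permutes G}"
    then have p: "\<pi> permutes G" by simp
    have "\<rho> (\<Prod>\<sigma>\<in>G. y (\<sigma> \<circ> inv (\<pi> \<sigma>))) = (\<Prod>\<sigma>\<in>G. \<rho> (y (\<sigma> \<circ> inv (\<pi> \<sigma>))))"
      using assms[OF p] by (intro fh_prod)
    then show "\<rho> (of_int (sign \<pi>) * (\<Prod>\<sigma>\<in>G. y (\<sigma> \<circ> inv (\<pi> \<sigma>)))) = of_int (sign \<pi>) * (\<Prod>\<sigma>\<in>G. \<rho> (y (\<sigma> \<circ> inv (\<pi> \<sigma>))))"
      using P[OF p] by (simp add: fh_mult fh_of_int sf_of_int[OF S])
  qed
  finally show ?thesis using T unfolding gdet_def by (auto intro!: sf_sum[OF S])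
qed

lemma fh_gpd:
  assumes "\<And>\<pi> \<sigma>. \<pi> permutes G \<Longrightarrow> \<sigma> \<in> G \<Longrightarrow> y (\<sigma> \<circ> inv (\<pi> \<sigma>)) \<in> L"
  shows "gpd G y \<tau> \<in> L \<and> \<rho> (gpd G y \<tau>) = gpd G (\<lambda>\<sigma>. \<rho> (y \<sigma>)) \<tau>"
proof -
  have if01: "(if c then 1 else 0 :: complex) = of_int (if c then 1 else 0)" for c by simp
  have P: "(\<Prod>\<sigma>\<in>G-{s}. y (\<sigma> \<circ> inv (\<pi> \<sigma>))) \<in> L" if "\<pi> permutes G" for \<pi> s
    using that assms by (auto intro!: sf_prod[OF S])
  have Q: "of_int (if c then 1 else 0) * (\<Prod>\<sigma>\<in>G-{s}. y (\<sigma> \<circ> inv (\<pi> \<sigma>))) \<in> L" if "\<pi> permutes G" for \<pi> s c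
    using P[OF that] by (intro sf_mult[OF S] sf_of_int[OF S])
  have R: "(\<Sum>s\<in>G. of_int (if s \<circ> inv (\<pi> s) = \<tau> then 1 else 0) * (\<Prod>\<sigma>\<in>G-{s}. y (\<sigma> \<circ> inv (\<pi> \<sigma>)))) \<in> L"
     if "\<pi> permutes G" for \<pi>
    using Q[OF that] by (intro sf_sum[OF S])
  have T: "of_int (sign \<pi>) * (\<Sum>s\<in>G. of_int (if s \<circ> inv (\<pi> s) = \<tau> then 1 else 0) * (\<Prod>\<sigma>\<in>G-{s}. y (\<sigma> \<circ> inv (\<pi> \<sigma>)))) \<in> L"
     if "\<pi> permutes G" for \<pi>
    using R[OF that] by (intro sf_mult[OF S] sf_of_int[OF S])
  have "\<rho> (gpd G y \<tau>) = (\<Sum>\<pi> | \<pi> permutes G. \<rho> (of_int (sign \<pi>) * (\<Sum>s\<in>G. of_int (if s \<circ> inv (\<pi> s) = \<tau> then 1 else 0) * (\<Prod>\<sigma>\<in>G-{s}. y (\<sigma> \<circ> inv (\<pi> \<sigma>))))))"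
    unfolding gpd_def if01 using T by (intro fh_sum) auto
  also have "\<dots> = gpd G (\<lambda>\<sigma>. \<rho> (y \<sigma>)) \<tau>"
    unfolding gpd_def if01
  proof (rule sum.cong[OF refl])
    fix \<pi> assume "\<pi> \<in> {\<pi>. \<pi> permutes G}"
    then have p: "\<pi> permutes G" by simp
    show "\<rho> (of_int (sign \<pi>) * (\<Sum>s\<in>G. of_int (if s \<circ> inv (\<pi> s) = \<tau> then 1 else 0) * (\<Prod>\<sigma>\<in>G-{s}. y (\<sigma> \<circ> inv (\<pi> \<sigma>))))) =
      of_int (sign \<pi>) * (\<Sum>s\<in>G. of_int (if s \<circ> inv (\<pi> s) = \<tau> then 1 else 0) * (\<Prod>\<sigma>\<in>G-{s}. \<rho> (y (\<sigma> \<circ> inv (\<pi> \<sigma>)))))"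
    proof -
      have "\<rho> (\<Sum>s\<in>G. of_int (if s \<circ> inv (\<pi> s) = \<tau> then 1 else 0) * (\<Prod>\<sigma>\<in>G-{s}. y (\<sigma> \<circ> inv (\<pi> \<sigma>))))
         = (\<Sum>s\<in>G. \<rho> (of_int (if s \<circ> inv (\<pi> s) = \<tau> then 1 else 0) * (\<Prod>\<sigma>\<in>G-{s}. y (\<sigma> \<circ> inv (\<pi> \<sigma>)))))"
        using Q[OF p] by (intro fh_sum)
      also have "\<dots> = (\<Sum>s\<in>G. of_int (if s \<circ> inv (\<pi> s) = \<tau> then 1 else 0) * (\<Prod>\<sigma>\<in>G-{s}. \<rho> (y (\<sigma> \<circ> inv (\<pi> \<sigma>)))))"
      proof (rule sum.cong[OF refl])
        fix s assume "s \<in> G"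
        have "\<rho> (\<Prod>\<sigma>\<in>G-{s}. y (\<sigma> \<circ> inv (\<pi> \<sigma>))) = (\<Prod>\<sigma>\<in>G-{s}. \<rho> (y (\<sigma> \<circ> inv (\<pi> \<sigma>))))"
          using assms[OF p] by (intro fh_prod) auto
        then show "\<rho> (of_int (if s \<circ> inv (\<pi> s) = \<tau> then 1 else 0) * (\<Prod>\<sigma>\<in>G-{s}. y (\<sigma> \<circ> inv (\<pi> \<sigma>)))) =
           of_int (if s \<circ> inv (\<pi> s) = \<tau> then 1 else 0) * (\<Prod>\<sigma>\<in>G-{s}. \<rho> (y (\<sigma> \<circ> inv (\<pi> \<sigma>))))"
          using P[OF p] fh_mult[OF sf_of_int[OF S]] fh_of_int by (simp add: fh_mult sf_of_int[OF S] fh_of_int del: of_int_0 of_int_1)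
      qed
      finally show ?thesis using R[OF p] fh_mult[OF sf_of_int[OF S]] fh_of_int by (simp add: fh_mult sf_of_int[OF S] fh_of_int del: of_int_0 of_int_1)
    qed
  qed
  finally show ?thesis using T unfolding gpd_def if01 by (auto intro!: sf_sum[OF S])
qed

end


section \<open>Automorphisms\<close>

context
  fixes L assumes S: "is_subfield L"
begin

lemma aut_fh: "\<rho> \<in> Aut L \<Longrightarrow> fh L \<rho>"
  unfolding Aut_def fh_def by (auto dest: bij_betwE)

lemma aut_in: "\<rho> \<in> Aut L \<Longrightarrow> x \<in> L \<Longrightarrow> \<rho> x \<in> L"
  unfolding Aut_def by (auto dest: bij_betwE)

lemma aut_out: "\<rho> \<in> Aut L \<Longrightarrow> x \<notin> L \<Longrightarrow> \<rho> x = x"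
  unfolding Aut_def by auto

lemma aut_bij: assumes r: "\<rho> \<in> Aut L" shows "bij \<rho>"
proof -
  have b: "bij_betw \<rho> L L" using r unfolding Aut_def by auto
  have "inj \<rho>"
  proof (rule injI)
    fix a b assume e: "\<rho> a = \<rho> b"
    show "a = b"
    proof (cases "a \<in> L"; cases "b \<in> L")
      assume "a \<in> L" "b \<in> L" then show ?thesis using b e by (auto simp: bij_betw_def inj_on_def)
    next
      assume "a \<in> L" "b \<notin> L" then show ?thesis using e aut_in[OF r, of a] aut_out[OF r, of b] by simp
    next
      assume "a \<notin> L" "b \<in> L" then show ?thesis using e aut_in[OF r, of b] aut_out[OF r, of a] by simp
    next
      assume "a \<notin> L" "b \<notin> L" then show ?thesis using e aut_out[OF r, of a] aut_out[OF r, of b] by simp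
    qed
  qed
  moreover have "surj \<rho>"
  proof -
    have "y \<in> range \<rho>" for y
    proof (cases "y \<in> L")
      case True then show ?thesis using b by (metis bij_betw_imp_surj_on imageE rangeI)
    next
      case False then show ?thesis using aut_out[OF r] by (metis rangeI)
    qed
    then show ?thesis by auto
  qed
  ultimately show ?thesis by (simp add: bij_def)
qed

lemma aut_comp: assumes r: "\<rho> \<in> Aut L" and s: "\<sigma> \<in> Aut L" shows "\<rho> \<circ> \<sigma> \<in> Aut L"
  unfolding Aut_def
proof (intro CollectI conjI ballI allI impI)
  show "bij_betw (\<rho> \<circ> \<sigma>) L L" using r s unfolding Aut_def by (blast intro: bij_betw_trans)
next
  fix x y assume x: "x \<in> L" and y: "y \<in> L"
  show "(\<rho> \<circ> \<sigma>) (x + y) = (\<rho> \<circ> \<sigma>) x + (\<rho> \<circ> \<sigma>) y"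
    using fh_add[OF S aut_fh[OF s] x y] fh_add[OF S aut_fh[OF r] aut_in[OF s x] aut_in[OF s y]] by simp
  show "(\<rho> \<circ> \<sigma>) (x * y) = (\<rho> \<circ> \<sigma>) x * (\<rho> \<circ> \<sigma>) y"
    using fh_mult[OF S aut_fh[OF s] x y] fh_mult[OF S aut_fh[OF r] aut_in[OF s x] aut_in[OF s y]] by simp
next
  show "(\<rho> \<circ> \<sigma>) 1 = 1" using fh_1[OF S aut_fh[OF s]] fh_1[OF S aut_fh[OF r]] by simp
next
  fix x assume "x \<notin> L" then show "(\<rho> \<circ> \<sigma>) x = x" using aut_out[OF r] aut_out[OF s] by simp
qed

lemma aut_id: "id \<in> Aut L"
  unfolding Aut_def by auto

lemma aut_inv: assumes r: "\<rho> \<in> Aut L" shows "inv \<rho> \<in> Aut L"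
proof -
  have b: "bij \<rho>" by (rule aut_bij[OF r])
  have ij: "inj \<rho>" using b bij_is_inj by auto
  have im: "\<rho> ` L = L" using r unfolding Aut_def by (auto simp: bij_betw_def)
  have ri: "\<rho> (inv \<rho> y) = y" for y using b by (simp add: bij_is_surj surj_f_inv_f)
  have ir: "inv \<rho> (\<rho> y) = y" for y using ij by simp
  have inL: "inv \<rho> y \<in> L" if "y \<in> L" for y
  proof -
    from that im obtain x where "x \<in> L" "y = \<rho> x" by blast
    then show ?thesis using ir by simp
  qed
  have fh: "fh L \<rho>" by (rule aut_fh[OF r])
  show ?thesis unfolding Aut_def
  proof (intro CollectI conjI ballI allI impI)
    show "bij_betw (inv \<rho>) L L"
      by (rule bij_betwI[where g=\<rho>]) (simp_all add: inL aut_in[OF r] ri ir Pi_iff)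
  next
    fix x y assume "x \<in> L" "y \<in> L"
    then have e1: "\<rho> (inv \<rho> x + inv \<rho> y) = \<rho> (inv \<rho> (x + y))"
      and e2: "\<rho> (inv \<rho> x * inv \<rho> y) = \<rho> (inv \<rho> (x * y))"
      using fh_add[OF S fh inL inL] fh_mult[OF S fh inL inL] ri by simp_all
    show "inv \<rho> (x + y) = inv \<rho> x + inv \<rho> y" using injD[OF ij e1] by simp
    show "inv \<rho> (x * y) = inv \<rho> x * inv \<rho> y" using injD[OF ij e2] by simp
  next
    show "inv \<rho> 1 = 1" by (rule inv_f_eq[OF ij fh_1[OF S fh]])
  next
    fix x assume "x \<notin> L" then show "inv \<rho> x = x" by (rule inv_f_eq[OF ij aut_out[OF r]])
  qed
qed

end

lemma nb_finite:
  assumes S: "is_subfield L" and nb: "normal_basis L (Aut L) \<xi>" shows "finite (Aut L)"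
proof (rule ccontr)
  assume inf: "infinite (Aut L)"
  from nb have h: "\<And>c. (\<Sum>\<sigma>\<in>Aut L. of_rat (c \<sigma>) * \<sigma> \<xi>) = 0 \<Longrightarrow> \<forall>\<sigma>\<in>Aut L. c \<sigma> = 0"
    unfolding normal_basis_def by blast
  have "\<forall>\<sigma>\<in>Aut L. (\<lambda>_. 1::rat) \<sigma> = 0" using h[of "\<lambda>_. 1"] inf by simp
  then show False using aut_id[OF S] by auto
qed

lemma fixed_rat:
  assumes S: "is_subfield L" and xi: "\<xi> \<in> L" and nb: "normal_basis L (Aut L) \<xi>"
    and x: "x \<in> L" and fx: "\<forall>\<rho>\<in>Aut L. \<rho> x = x"
  shows "x \<in> \<rat>"
proof -
  let ?G = "Aut L"
  have const: "\<forall>\<sigma>\<in>?G. c \<sigma> = c id"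
    if xL: "z \<in> L" and fz: "\<forall>\<rho>\<in>?G. \<rho> z = z" and zc: "z = (\<Sum>\<sigma>\<in>?G. of_rat (c \<sigma>) * \<sigma> \<xi>)" for z c
  proof
    fix \<sigma> assume s: "\<sigma> \<in> ?G"
    have "c \<sigma>' = c (inv \<rho> \<circ> \<sigma>')" if r: "\<rho> \<in> ?G" and s': "\<sigma>' \<in> ?G" for \<rho> \<sigma>'
    proof -
      have fh: "fh L \<rho>" by (rule aut_fh[OF S r])
      have b: "bij \<rho>" by (rule aut_bij[OF S r])
      have ir: "inv \<rho> \<circ> \<rho> = id" using b by (meson bij_is_inj inj_iff)
      have ri: "\<rho> \<circ> inv \<rho> = id" using b by (meson bij_is_surj surj_iff)
      have bL: "bij_betw (\<lambda>\<sigma>. \<rho> \<circ> \<sigma>) ?G ?G"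
        by (rule bij_betwI[where g="\<lambda>\<sigma>. inv \<rho> \<circ> \<sigma>"]) (auto simp: aut_comp[OF S] aut_inv[OF S] r comp_assoc[symmetric] ri ir)
      have mem: "of_rat (c \<sigma>) * \<sigma> \<xi> \<in> L" if "\<sigma> \<in> ?G" for \<sigma>
        using sf_mult[OF S sf_rat[OF S] aut_in[OF S that xi]] by simp
      have "z = \<rho> z" using fz r by auto
      also have "\<dots> = (\<Sum>\<sigma>\<in>?G. \<rho> (of_rat (c \<sigma>) * \<sigma> \<xi>))"
        unfolding zc using mem by (intro fh_sum[OF S fh])
      also have "\<dots> = (\<Sum>\<sigma>\<in>?G. of_rat (c (inv \<rho> \<circ> (\<rho> \<circ> \<sigma>))) * (\<rho> \<circ> \<sigma>) \<xi>)"
        by (rule sum.cong[OF refl]) (auto simp: fh_mult[OF S fh] fh_rat[OF S fh] sf_rat[OF S] aut_in[OF S] xi comp_assoc[symmetric] ir)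
      also have "\<dots> = (\<Sum>\<sigma>\<in>?G. of_rat (c (inv \<rho> \<circ> \<sigma>)) * \<sigma> \<xi>)"
        using sum.reindex_bij_betw[OF bL, of "\<lambda>\<sigma>. of_rat (c (inv \<rho> \<circ> \<sigma>)) * \<sigma> \<xi>"] by simp
      finally have "(\<Sum>\<sigma>\<in>?G. of_rat (c \<sigma> - c (inv \<rho> \<circ> \<sigma>)) * \<sigma> \<xi>) = 0"
        unfolding zc by (simp add: of_rat_diff left_diff_distrib sum_subtractf)
      moreover from nb have h: "\<And>c. (\<Sum>\<sigma>\<in>?G. of_rat (c \<sigma>) * \<sigma> \<xi>) = 0 \<Longrightarrow> \<forall>\<sigma>\<in>?G. c \<sigma> = 0"
        unfolding normal_basis_def by blast
      ultimately have "\<forall>\<sigma>\<in>?G. c \<sigma> - c (inv \<rho> \<circ> \<sigma>) = 0"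
        using h[of "\<lambda>\<sigma>. c \<sigma> - c (inv \<rho> \<circ> \<sigma>)"] by simp
      then show ?thesis using s' by auto
    qed
    from this[OF s s] show "c \<sigma> = c id"
      using aut_bij[OF S s] by (metis bij_is_inj inj_iff)
  qed
  obtain c where c: "x = (\<Sum>\<sigma>\<in>?G. of_rat (c \<sigma>) * \<sigma> \<xi>)" using nb x unfolding normal_basis_def by blast
  obtain c1 where c1: "1 = (\<Sum>\<sigma>\<in>?G. of_rat (c1 \<sigma>) * \<sigma> \<xi>)" using nb sf_1[OF S] unfolding normal_basis_def by blast
  define T where "T = (\<Sum>\<sigma>\<in>?G. \<sigma> \<xi>)"
  have xc: "x = of_rat (c id) * T"
    using const[OF x fx c] unfolding c T_def sum_distrib_left by (intro sum.cong) auto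
  have fix1: "\<forall>\<rho>\<in>?G. \<rho> 1 = 1" unfolding Aut_def by auto
  have oc: "1 = of_rat (c1 id) * T"
    using const[OF sf_1[OF S] fix1 c1] unfolding T_def sum_distrib_left
    by (subst c1) (intro sum.cong, auto)
  then have "c1 id \<noteq> 0" by auto
  with xc oc have "x = of_rat (c id) / of_rat (c1 id)"
    by (simp add: field_simps)
  then show ?thesis by simp
qed


theorem corollary4p5:
  fixes F :: "int poly" and d :: nat and \<xi> :: complex
  assumes "lead_coeff F = 1" and "irreducible F" and "degree F = d"
    and "poly (map_poly of_int F) \<xi> = 0"
    and "galois_over_Q (gen_field \<xi>)"
    and "normal_basis (gen_field \<xi>) (Aut (gen_field \<xi>)) \<xi>"
  shows "\<forall>\<tau>\<in>Aut (gen_field \<xi>). \<forall>i::nat.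
           a_coeff (Aut (gen_field \<xi>)) \<xi> (conj_class (Aut (gen_field \<xi>)) \<tau>) i \<in> \<rat>"
proof (intro ballI allI)
  fix \<tau> i
  define L where "L = gen_field \<xi>"
  define G where "G = Aut L"
  define K where "K = conj_class G \<tau>"
  define y where "y = (\<lambda>\<sigma>::complex\<Rightarrow>complex. \<sigma> \<xi>)"
  have S: "is_subfield L" unfolding L_def by (rule gen_field_subfield)
  have xi: "\<xi> \<in> L" unfolding L_def by (rule gen_field_xi)
  have nb: "normal_basis L (Aut L) \<xi>" using assms(6) unfolding L_def .
  have fin: "finite G" unfolding G_def by (rule nb_finite[OF S nb])
  have grp: "\<sigma> \<circ> inv (\<pi> \<sigma>) \<in> G" if "\<pi> permutes G" "\<sigma> \<in> G" for \<pi> \<sigma>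
  proof -
    have "\<pi> \<sigma> \<in> Aut L" using permutes_in_image[OF that(1)] that(2) G_def by simp
    then show ?thesis using aut_comp[OF S _ aut_inv[OF S]] that(2) G_def by simp
  qed
  have yL: "y \<sigma> \<in> L" if "\<sigma> \<in> G" for \<sigma> unfolding y_def using aut_in[OF S _ xi] that G_def by simp
  have ymem: "\<And>\<pi> \<sigma>. \<pi> permutes G \<Longrightarrow> \<sigma> \<in> G \<Longrightarrow> y (\<sigma> \<circ> inv (\<pi> \<sigma>)) \<in> L"
    using grp yL by blast
  have fhid: "fh L id" by (rule aut_fh[OF S aut_id[OF S]])
  have FG: "gdet G y \<in> L \<and> \<rho> (gdet G y) = gdet G (\<lambda>\<sigma>. \<rho> (y \<sigma>))" if "fh L \<rho>" for \<rho>
    by (rule fh_gdet[OF S that], rule ymem)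
  have FD: "gpd G y t \<in> L \<and> \<rho> (gpd G y t) = gpd G (\<lambda>\<sigma>. \<rho> (y \<sigma>)) t" if "fh L \<rho>" for \<rho> t
    by (rule fh_gpd[OF S that], rule ymem)
  have gp: "gpartial G y t = (1 / of_nat (card G)) * gpd G y t" for t
    unfolding gpartial_def using DERIV_imp_deriv[OF gdet_deriv[OF fin]] by simp
  define E where "E = gdet G y"
  have EL: "E \<in> L" unfolding E_def using FG[OF fhid] by blast
  have DL: "gpd G y t \<in> L" for t using FD[OF fhid] by blast
  have cL: "1 / of_nat (card G) \<in> L" by (rule sf_rat[OF S]) simp
  define f where "f = (\<lambda>\<sigma> t. \<sigma> (\<xi> ^ i) * ((1 / of_nat (card G)) * gpd G y (\<sigma> \<circ> t)))"
  have fL: "f \<sigma> t \<in> L" if "\<sigma> \<in> G" for \<sigma> t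
    unfolding f_def using that G_def
    sf_mult[OF S aut_in[OF S _ sf_power[OF S xi]] sf_mult[OF S cL DL]] by simp
  define Sm where "Sm = (\<Sum>\<sigma>\<in>G. \<Sum>t\<in>K. f \<sigma> t)"
  have SmL: "Sm \<in> L" unfolding Sm_def using fL by (intro sf_sum[OF S]) auto
  have a: "a_coeff G \<xi> K i = (1 / E) * Sm"
    unfolding a_coeff_def Sm_def f_def E_def y_def[symmetric] gp by simp
  have aL: "(1 / E) * Sm \<in> L" by (intro sf_mult[OF S] sf_divide[OF S] sf_1[OF S] EL SmL)
  have fixd: "\<forall>\<rho>\<in>Aut L. \<rho> ((1 / E) * Sm) = (1 / E) * Sm"
  proof
    fix \<rho> assume r: "\<rho> \<in> Aut L"
    have fh: "fh L \<rho>" by (rule aut_fh[OF S r])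
    have b: "bij \<rho>" by (rule aut_bij[OF S r])
    have c1: "\<forall>\<sigma>\<in>G. \<rho> \<circ> \<sigma> \<in> G" using aut_comp[OF S r] unfolding G_def by blast
    have c2: "\<forall>\<sigma>\<in>G. inv \<rho> \<circ> \<sigma> \<in> G" using aut_comp[OF S aut_inv[OF S r]] unfolding G_def by blast
    define s where "s = (of_int (sign (\<lambda>\<sigma>. if \<sigma>\<in>G then inv \<rho> \<circ> \<sigma> else \<sigma>)) :: complex)"
    have ss: "s * s = 1" unfolding s_def of_int_mult[symmetric] sign_idempotent by simp
    then have s0: "s \<noteq> 0" by auto
    have ry: "(\<lambda>\<sigma>. \<rho> (y \<sigma>)) = (\<lambda>\<sigma>. y (\<rho> \<circ> \<sigma>))" unfolding y_def by simp
    have hE: "\<rho> E = s * E"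
      using FG[OF fh] gdet_shift[OF fin b c1 c2, of y] unfolding E_def ry s_def by simp
    have hD: "\<rho> (gpd G y t) = s * gpd G y (\<rho> \<circ> t)" for t
      using FD[OF fh] gpd_shift[OF fin b c1 c2, of y] unfolding ry s_def by simp
    have bL: "bij_betw (\<lambda>\<sigma>. \<rho> \<circ> \<sigma>) G G"
    proof -
      have ir: "inv \<rho> \<circ> \<rho> = id" using b by (meson bij_is_inj inj_iff)
      have ri: "\<rho> \<circ> inv \<rho> = id" using b by (meson bij_is_surj surj_iff)
      show ?thesis
        by (rule bij_betwI[where g="\<lambda>\<sigma>. inv \<rho> \<circ> \<sigma>"]) (auto simp: c1 c2 comp_assoc[symmetric] ri ir)
    qed
    have hf: "\<rho> (f \<sigma> t) = s * f (\<rho> \<circ> \<sigma>) t" if "\<sigma> \<in> G" for \<sigma> t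
    proof -
      have x1: "\<sigma> (\<xi> ^ i) \<in> L" using that G_def aut_in[OF S _ sf_power[OF S xi]] by simp
      have "\<rho> (f \<sigma> t) = \<rho> (\<sigma> (\<xi> ^ i)) * (\<rho> (1 / of_nat (card G)) * \<rho> (gpd G y (\<sigma> \<circ> t)))"
        unfolding f_def fh_mult[OF S fh x1 sf_mult[OF S cL DL]] fh_mult[OF S fh cL DL] by (rule refl)
      also have "\<dots> = s * f (\<rho> \<circ> \<sigma>) t"
        unfolding f_def hD fh_rat[OF S fh, of "1 / of_nat (card G)", simplified] by (simp add: comp_assoc)
      finally show ?thesis .
    qed
    have "\<rho> Sm = (\<Sum>\<sigma>\<in>G. \<rho> (\<Sum>t\<in>K. f \<sigma> t))"
      unfolding Sm_def using fL by (intro fh_sum[OF S fh] sf_sum[OF S]) auto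
    also have "\<dots> = (\<Sum>\<sigma>\<in>G. \<Sum>t\<in>K. s * f (\<rho> \<circ> \<sigma>) t)"
    proof (rule sum.cong[OF refl])
      fix \<sigma> assume "\<sigma> \<in> G"
      then show "\<rho> (\<Sum>t\<in>K. f \<sigma> t) = (\<Sum>t\<in>K. s * f (\<rho> \<circ> \<sigma>) t)"
        using fL hf by (subst fh_sum[OF S fh]) auto
    qed
    also have "\<dots> = s * (\<Sum>\<sigma>\<in>G. \<Sum>t\<in>K. f (\<rho> \<circ> \<sigma>) t)"
      by (simp add: sum_distrib_left)
    also have "(\<Sum>\<sigma>\<in>G. \<Sum>t\<in>K. f (\<rho> \<circ> \<sigma>) t) = Sm"
      unfolding Sm_def using sum.reindex_bij_betw[OF bL, of "\<lambda>\<sigma>. \<Sum>t\<in>K. f \<sigma> t"] by simp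
    finally have hS: "\<rho> Sm = s * Sm" .
    have "\<rho> ((1 / E) * Sm) = \<rho> (1 / E) * \<rho> Sm"
      by (intro fh_mult[OF S fh] sf_divide[OF S] sf_1[OF S] EL SmL)
    also have "\<rho> (1 / E) = 1 / (s * E)"
      using fh_divide[OF S fh sf_1[OF S] EL] fh_1[OF S fh] hE by simp
    finally show "\<rho> ((1 / E) * Sm) = (1 / E) * Sm"
      using s0 hS by (simp add: field_simps)
  qed
  have "(1 / E) * Sm \<in> \<rat>" by (rule fixed_rat[OF S xi nb aL fixd])
  then show "a_coeff (Aut (gen_field \<xi>)) \<xi> (conj_class (Aut (gen_field \<xi>)) \<tau>) i \<in> \<rat>"
    using a unfolding G_def K_def L_def by simp
qed

end
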